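(* For Lebesgue-almost all $(\xi,\eta)\in\mathbb{R}^2$ one has $\lambda_{\min}(\xi,\eta)=\tfrac12$.
   Context: For real numbers $\xi,\eta$: $\lambda(\xi,\eta)$ (resp. $\widehat{\lambda}(\xi,\eta)$) is the supremum of the real $\lambda>0$ such that the system $1\le |x_0|\le X$, $\max(|x_0\xi-x_1|,|x_0\eta-x_2|)\le X^{-\lambda}$ has a solution $(x_0,x_1,x_2)\in\mathbb{Z}^3\setminus\{0\}$ for arbitrarily large $X$ (resp. for every sufficiently large $X$). For $0\le\mu<\lambda(\xi,\eta)$, $\widehat{\lambda}_\mu(\xi,\eta)$ is the supremum of the real $\lambda>0$ such that the system $1\le|x_0|\le X$, $\max(|x_0\xi-x_1|,|x_0\eta-x_2|)\le\min(X^{-\lambda},|x_0|^{-\mu})$ has a solution $(x_0,x_1,x_2)\in\mathbb{Z}^3\setminus\{0\}$ for every sufficiently large $X$ (the supremum of the empty set being $0$). The map $\mu\mapsto\widehat{\lambda}_\mu(\xi,\eta)$ is non-increasing, and $\lambda_{\min}(\xi,\eta):=\inf_{0<\mu<\lambda(\xi,\eta)}\widehat{\lambda}_\mu(\xi,\eta)=\lim_{\mu\to\lambda(\xi,\eta)^-}\widehat{\lambda}_\mu(\xi,\eta)$. *)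

theory Defs
  imports "HOL-Analysis.Analysis"
begin

definition solvable :: "real \<Rightarrow> real \<Rightarrow> real \<Rightarrow> real option \<Rightarrow> real \<Rightarrow> bool" where
  "solvable xi eta l mu X \<longleftrightarrow>
     (\<exists>x0 x1 x2 :: int. 1 \<le> \<bar>x0\<bar> \<and> real_of_int \<bar>x0\<bar> \<le> X \<and>
        max \<bar>of_int x0 * xi - of_int x1\<bar> \<bar>of_int x0 * eta - of_int x2\<bar> \<le> X powr (- l) \<and>
        (case mu of None \<Rightarrow> True
         | Some m \<Rightarrow> max \<bar>of_int x0 * xi - of_int x1\<bar> \<bar>of_int x0 * eta - of_int x2\<bar>
                      \<le> real_of_int \<bar>x0\<bar> powr (- m)))"

text \<open>Uniform exponent lambda(xi,eta); sup of the empty set is taken to be 0.\<close>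
definition lam :: "real \<Rightarrow> real \<Rightarrow> ereal" where
  "lam xi eta = Sup (insert 0 (ereal ` {l. l > 0 \<and> (\<exists>\<^sub>F X in at_top. solvable xi eta l None X)}))"

definition lamhat_mu :: "real \<Rightarrow> real \<Rightarrow> real \<Rightarrow> ereal" where
  "lamhat_mu mu xi eta = Sup (insert 0 (ereal ` {l. l > 0 \<and> (\<forall>\<^sub>F X in at_top. solvable xi eta l (Some mu) X)}))"

definition lam_min :: "real \<Rightarrow> real \<Rightarrow> ereal" where
  "lam_min xi eta = Inf ((\<lambda>mu. lamhat_mu mu xi eta) ` {mu. 0 < mu \<and> ereal mu < lam xi eta})"

end

theory Submission
  imports Defs
begin


definition Sset :: "int \<Rightarrow> nat \<Rightarrow> real \<Rightarrow> real set" where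
  "Sset a n d = (\<Union>p\<in>{\<lfloor>real (Suc n) * a\<rfloor> - 1 .. \<lfloor>real (Suc n) * a\<rfloor> + int (Suc n) + 1}.
      {(real_of_int p - d) / real (Suc n) .. (real_of_int p + d) / real (Suc n)})"

lemma Sset_sets[measurable]: "Sset a n d \<in> sets borel"
  unfolding Sset_def by (intro sets.finite_UN) auto

lemma Sset_meas:
  assumes "0 \<le> d"
  shows "emeasure lborel (Sset a n d) \<le> ennreal (8 * d)"
proof -
  let ?I = "{\<lfloor>real (Suc n) * a\<rfloor> - 1 .. \<lfloor>real (Suc n) * a\<rfloor> + int (Suc n) + 1}"
  have "emeasure lborel (Sset a n d) \<le> (\<Sum>p\<in>?I. emeasure lborel {(real_of_int p - d) / real (Suc n) .. (real_of_int p + d) / real (Suc n)})"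
    unfolding Sset_def by (rule emeasure_subadditive_finite) auto
  also have "\<dots> = (\<Sum>p\<in>?I. ennreal (2 * d / real (Suc n)))"
    using assms by (intro sum.cong refl) (simp add: divide_simps diff_divide_distrib[symmetric])
  also have "\<dots> = ennreal (real (Suc n + 3) * (2 * d / real (Suc n)))"
  proof -
    have c: "card ?I = Suc n + 3" by simp
    have "(\<Sum>p\<in>?I. ennreal (2 * d / real (Suc n))) = of_nat (card ?I) * ennreal (2 * d / real (Suc n))"
      by simp
    also have "\<dots> = ennreal (real (Suc n + 3)) * ennreal (2 * d / real (Suc n))"
      unfolding c by (simp only: ennreal_of_nat_eq_real_of_nat)
    also have "\<dots> = ennreal (real (Suc n + 3) * (2 * d / real (Suc n)))"
      by (rule ennreal_mult[symmetric]) (use assms in auto)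
    finally show ?thesis .
  qed
  also have "\<dots> \<le> ennreal (8 * d)"
  proof (intro ennreal_leI)
    have "real (Suc n + 3) * (2 * d / real (Suc n)) = 2*d + 6 * d / real (Suc n)"
      by (simp add: field_simps)
    also have "\<dots> \<le> 2*d + 6*d" using assms by (simp add: divide_le_eq mult_le_cancel_left1)
    finally show "real (Suc n + 3) * (2 * d / real (Suc n)) \<le> 8 * d" by simp
  qed
  finally show ?thesis .
qed

lemma Sset_mem:
  assumes "0 \<le> d" "d \<le> 1" "real_of_int a \<le> x" "x \<le> real_of_int a + 1"
    "\<bar>real (Suc n) * x - real_of_int p\<bar> \<le> d"
  shows "x \<in> Sset a n d"
proof -
  let ?q = "real (Suc n)"
  have qa1: "?q * a \<le> ?q * x" using assms(3) by (intro mult_left_mono) auto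
  have "?q * x \<le> ?q * (a + 1)" using assms(4) by (intro mult_left_mono) auto
  then have qa: "?q * a \<le> ?q * x" "?q * x \<le> ?q * a + ?q" using qa1 by (auto simp: algebra_simps)
  have "p \<ge> \<lfloor>?q * a\<rfloor> - 1"
  proof -
    have "real_of_int p \<ge> ?q * a - 1" using qa assms(2,5) by linarith
    then show ?thesis by linarith
  qed
  moreover have "p \<le> \<lfloor>?q * a\<rfloor> + int (Suc n) + 1"
  proof -
    have "real_of_int p \<le> ?q * a + ?q + 1" using qa assms(2,5) by linarith
    then show ?thesis by linarith
  qed
  moreover have "x \<in> {(real_of_int p - d) / ?q .. (real_of_int p + d) / ?q}"
    using assms(5) by (auto simp: field_simps abs_le_iff)
  ultimately show ?thesis unfolding Sset_def by auto
qed

lemma prod_meas: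
  fixes S T :: "real set"
  assumes "S \<in> sets borel" "T \<in> sets borel"
  shows "emeasure lborel (S \<times> T) = emeasure lborel S * emeasure lborel T"
proof -
  have "emeasure (lborel \<Otimes>\<^sub>M lborel) (S \<times> T) = emeasure lborel S * emeasure lborel T"
    using assms by (intro lborel.emeasure_pair_measure_Times) auto
  then show ?thesis by (simp add: lborel_prod)
qed



lemma metric_box:
  assumes l: "l > 1/2"
  shows "AE p in lborel. (real_of_int a \<le> fst p \<and> fst p \<le> real_of_int a + 1 \<and>
      real_of_int b \<le> snd p \<and> snd p \<le> real_of_int b + 1) \<longrightarrow>
    (\<forall>\<^sub>F n in sequentially. \<not>(\<exists>x1::int. \<exists>x2::int. \<bar>real (Suc n) * fst p - x1\<bar> \<le> real (Suc n) powr (-l)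
         \<and> \<bar>real (Suc n) * snd p - x2\<bar> \<le> real (Suc n) powr (-l)))"
proof -
  define \<delta> where "\<delta> n = real (Suc n) powr (-l)" for n
  have d0: "0 \<le> \<delta> n" for n unfolding \<delta>_def by simp
  have d1: "\<delta> n \<le> 1" for n unfolding \<delta>_def using l powr_mono[of "-l" 0 "real (Suc n)"] by auto
  define A where "A n = Sset a n (\<delta> n) \<times> Sset b n (\<delta> n)" for n
  have As: "A n \<in> sets (lborel :: (real\<times>real) measure)" for n
  proof -
    have "A n \<in> sets (lborel \<Otimes>\<^sub>M lborel :: (real\<times>real) measure)"
      unfolding A_def by (intro pair_measureI) auto
    then show ?thesis by (simp only: lborel_prod)
  qed
  have Ae: "emeasure lborel (A n) \<le> ennreal (64 * (\<delta> n)\<^sup>2)" for n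
  proof -
    have "emeasure lborel (A n) = emeasure lborel (Sset a n (\<delta> n)) * emeasure lborel (Sset b n (\<delta> n))"
      unfolding A_def by (intro prod_meas) auto
    also have "\<dots> \<le> ennreal (8 * \<delta> n) * ennreal (8 * \<delta> n)"
      by (intro mult_mono Sset_meas d0) auto
    also have "\<dots> = ennreal (64 * (\<delta> n)\<^sup>2)"
      using d0[of n] by (simp add: ennreal_mult[symmetric] power2_eq_square)
    finally show ?thesis .
  qed
  have Afin: "emeasure lborel (A n) < \<infinity>" for n
    unfolding infinity_ennreal_def by (rule le_less_trans[OF Ae ennreal_less_top])
  have Am: "measure lborel (A n) \<le> 64 * (\<delta> n)\<^sup>2" for n
  proof -
    have "measure lborel (A n) = enn2real (emeasure lborel (A n))" by (simp add: measure_def)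
    also have "\<dots> \<le> enn2real (ennreal (64 * (\<delta> n)\<^sup>2))"
      by (intro enn2real_mono Ae) auto
    finally show ?thesis by simp
  qed
  have "summable (\<lambda>n. real (Suc n) powr (-2*l))"
    using summable_Suc_iff[where f="\<lambda>n. of_nat n powr (-2*l) :: real"] summable_real_powr_iff l by simp
  moreover have "(\<delta> n)\<^sup>2 = real (Suc n) powr (-2*l)" for n
  proof -
    have "(\<delta> n)\<^sup>2 = real (Suc n) powr (-l) * real (Suc n) powr (-l)"
      unfolding \<delta>_def power2_eq_square ..
    also have "\<dots> = real (Suc n) powr (-l + -l)" by (rule powr_add[symmetric])
    finally show ?thesis by simp
  qed
  ultimately have "summable (\<lambda>n. 64 * (\<delta> n)\<^sup>2)"
    by (simp add: summable_mult)
  then have "summable (\<lambda>n. measure lborel (A n))"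
    by (rule summable_comparison_test'[where N=0]) (use Am in auto)
  then have "AE p in lborel. eventually (\<lambda>n. p \<in> space lborel - A n) sequentially"
    by (intro borel_cantelli_AE1 As Afin)
  then show ?thesis
  proof (rule AE_mp, intro AE_I2 impI)
    fix p :: "real \<times> real"
    assume ev: "eventually (\<lambda>n. p \<in> space lborel - A n) sequentially"
      and box: "real_of_int a \<le> fst p \<and> fst p \<le> real_of_int a + 1 \<and> real_of_int b \<le> snd p \<and> snd p \<le> real_of_int b + 1"
    show "\<forall>\<^sub>F n in sequentially. \<not>(\<exists>x1::int. \<exists>x2::int. \<bar>real (Suc n) * fst p - x1\<bar> \<le> real (Suc n) powr (-l)
         \<and> \<bar>real (Suc n) * snd p - x2\<bar> \<le> real (Suc n) powr (-l))"
      using ev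
    proof (rule eventually_mono)
      fix n
      assume pA: "p \<in> space lborel - A n"
      show "\<not>(\<exists>x1::int. \<exists>x2::int. \<bar>real (Suc n) * fst p - x1\<bar> \<le> real (Suc n) powr (-l)
         \<and> \<bar>real (Suc n) * snd p - x2\<bar> \<le> real (Suc n) powr (-l))"
      proof (intro notI, elim exE conjE)
      fix x1 x2 :: int
      assume "\<bar>real (Suc n) * fst p - real_of_int x1\<bar> \<le> real (Suc n) powr (-l)"
        "\<bar>real (Suc n) * snd p - real_of_int x2\<bar> \<le> real (Suc n) powr (-l)"
      moreover have "fst p \<in> Sset a n (\<delta> n)"
        by (rule Sset_mem[OF d0 d1, where p=x1]) (use box calculation in \<open>auto simp: \<delta>_def\<close>)
      moreover have "snd p \<in> Sset b n (\<delta> n)"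
        by (rule Sset_mem[OF d0 d1, where p=x2]) (use box calculation in \<open>auto simp: \<delta>_def\<close>)
      ultimately show False using pA unfolding A_def by (cases p) auto
    qed
    qed
  qed
qed



definition goodP :: "real \<Rightarrow> real \<Rightarrow> real \<Rightarrow> bool" where
  "goodP l xi eta \<longleftrightarrow> (\<exists>N::nat. \<forall>x0 x1 x2::int. int N \<le> \<bar>x0\<bar> \<longrightarrow>
     \<not> (max \<bar>of_int x0 * xi - of_int x1\<bar> \<bar>of_int x0 * eta - of_int x2\<bar> \<le> real_of_int \<bar>x0\<bar> powr (-l)))"

lemma metric_all:
  assumes l: "l > 1/2"
  shows "AE p in lborel. goodP l (fst p) (snd p)"
proof -
  have "AE p in lborel. \<forall>ab::int\<times>int. (real_of_int (fst ab) \<le> fst p \<and> fst p \<le> real_of_int (fst ab) + 1 \<and>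
      real_of_int (snd ab) \<le> snd p \<and> snd p \<le> real_of_int (snd ab) + 1) \<longrightarrow>
    (\<forall>\<^sub>F n in sequentially. \<not>(\<exists>x1::int. \<exists>x2::int. \<bar>real (Suc n) * fst p - x1\<bar> \<le> real (Suc n) powr (-l)
         \<and> \<bar>real (Suc n) * snd p - x2\<bar> \<le> real (Suc n) powr (-l)))"
    unfolding AE_all_countable using metric_box[OF l] by blast
  then show ?thesis
  proof (rule AE_mp, intro AE_I2 impI)
    fix p :: "real \<times> real"
    assume H: "\<forall>ab::int\<times>int. (real_of_int (fst ab) \<le> fst p \<and> fst p \<le> real_of_int (fst ab) + 1 \<and>
      real_of_int (snd ab) \<le> snd p \<and> snd p \<le> real_of_int (snd ab) + 1) \<longrightarrow>
    (\<forall>\<^sub>F n in sequentially. \<not>(\<exists>x1::int. \<exists>x2::int. \<bar>real (Suc n) * fst p - x1\<bar> \<le> real (Suc n) powr (-l)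
         \<and> \<bar>real (Suc n) * snd p - x2\<bar> \<le> real (Suc n) powr (-l)))"
    have "\<forall>\<^sub>F n in sequentially. \<not>(\<exists>x1::int. \<exists>x2::int. \<bar>real (Suc n) * fst p - x1\<bar> \<le> real (Suc n) powr (-l)
         \<and> \<bar>real (Suc n) * snd p - x2\<bar> \<le> real (Suc n) powr (-l))"
    proof (rule H[rule_format, of "(\<lfloor>fst p\<rfloor>, \<lfloor>snd p\<rfloor>)"], unfold fst_conv snd_conv, intro conjI)
    qed linarith+
    then obtain N0 where N0: "\<And>n. n \<ge> N0 \<Longrightarrow> \<not>(\<exists>x1::int. \<exists>x2::int. \<bar>real (Suc n) * fst p - x1\<bar> \<le> real (Suc n) powr (-l)
         \<and> \<bar>real (Suc n) * snd p - x2\<bar> \<le> real (Suc n) powr (-l))"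
      unfolding eventually_sequentially by blast
    show "goodP l (fst p) (snd p)"
      unfolding goodP_def
    proof (intro exI[of _ "Suc N0"] allI impI notI)
      fix x0 x1 x2 :: int
      assume x0: "int (Suc N0) \<le> \<bar>x0\<bar>"
        and e: "max \<bar>of_int x0 * fst p - of_int x1\<bar> \<bar>of_int x0 * snd p - of_int x2\<bar> \<le> real_of_int \<bar>x0\<bar> powr (-l)"
      define n where "n = nat \<bar>x0\<bar> - 1"
      have nN: "n \<ge> N0" using x0 unfolding n_def by linarith
      have qn: "real (Suc n) = real_of_int \<bar>x0\<bar>" using x0 unfolding n_def by linarith
      show False
      proof (cases "x0 \<ge> 0")
        case True
        then have "\<bar>real (Suc n) * fst p - x1\<bar> \<le> real (Suc n) powr (-l)
             \<and> \<bar>real (Suc n) * snd p - x2\<bar> \<le> real (Suc n) powr (-l)"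
          using e unfolding qn by simp
        then show False using N0[OF nN] by blast
      next
        case False
        then have "\<bar>real (Suc n) * fst p - (-x1)\<bar> \<le> real (Suc n) powr (-l)
             \<and> \<bar>real (Suc n) * snd p - (-x2)\<bar> \<le> real (Suc n) powr (-l)"
          using e unfolding qn by (simp add: abs_minus_commute)
        then show False using N0[OF nN] by blast
      qed
    qed
  qed
qed



lemma not_freq:
  assumes g: "goodP l0 xi eta" and l0: "0 < l0" "l0 \<le> l"
  shows "\<not> (\<exists>\<^sub>F X in at_top. solvable xi eta l None X)"
proof
  assume fr: "\<exists>\<^sub>F X in at_top. solvable xi eta l None X"
  define e where "e t = max \<bar>of_int (fst t) * xi - of_int (fst (snd t))\<bar> \<bar>of_int (fst t) * eta - of_int (snd (snd t))\<bar>" for t :: "int \<times> int \<times> int"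
  obtain N :: nat where N: "\<And>x0 x1 x2. int N \<le> \<bar>x0\<bar> \<Longrightarrow>
     \<not> (e (x0, x1, x2) \<le> real_of_int \<bar>x0\<bar> powr (-l0))"
    using g unfolding goodP_def e_def by auto
  define M where "M = \<lceil>real N * (\<bar>xi\<bar> + \<bar>eta\<bar>)\<rceil> + 1"
  define T where "T = {t \<in> {-int N..int N} \<times> {-M..M} \<times> {-M..M}. 1 \<le> \<bar>fst t\<bar>}"
  have Tfin: "finite T" unfolding T_def by auto
  have e0: "e t \<ge> 0" for t unfolding e_def by simp
  show False
  proof (cases "\<exists>t\<in>T. e t = 0")
    case True
    then obtain x0 x1 x2 where t: "(x0, x1, x2) \<in> T" "e (x0, x1, x2) = 0" by auto
    have x0: "1 \<le> \<bar>x0\<bar>" using t(1) unfolding T_def by auto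
    have "e ((int N + 1) * x0, (int N + 1) * x1, (int N + 1) * x2) = (real N + 1) * e (x0, x1, x2)"
    proof -
      have "\<bar>real_of_int ((int N + 1) * x0) * xi - real_of_int ((int N + 1) * x1)\<bar> = (real N + 1) * \<bar>x0 * xi - x1\<bar>"
      proof -
        have "real_of_int ((int N + 1) * x0) * xi - real_of_int ((int N + 1) * x1) = (real N + 1) * (x0 * xi - x1)"
          by (simp add: algebra_simps)
        then show ?thesis by (simp add: abs_mult)
      qed
      moreover have "\<bar>real_of_int ((int N + 1) * x0) * eta - real_of_int ((int N + 1) * x2)\<bar> = (real N + 1) * \<bar>x0 * eta - x2\<bar>"
      proof -
        have "real_of_int ((int N + 1) * x0) * eta - real_of_int ((int N + 1) * x2) = (real N + 1) * (x0 * eta - x2)"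
          by (simp add: algebra_simps)
        then show ?thesis by (simp add: abs_mult)
      qed
      ultimately show ?thesis unfolding e_def by (simp add: max_mult_distrib_left)
    qed
    then have "e ((int N + 1) * x0, (int N + 1) * x1, (int N + 1) * x2) \<le> real_of_int \<bar>(int N + 1) * x0\<bar> powr (-l0)"
      using t(2) by simp
    moreover have "int N \<le> \<bar>(int N + 1) * x0\<bar>"
    proof -
      have "\<bar>(int N + 1) * x0\<bar> = (int N + 1) * \<bar>x0\<bar>" by (simp add: abs_mult)
      also have "\<dots> \<ge> (int N + 1) * 1" using x0 by (intro mult_left_mono) auto
      finally show ?thesis by simp
    qed
    ultimately show False using N by blast
  next
    case False
    define m where "m = Min (insert 1 (e ` T))"
    have mpos: "m > 0" unfolding m_def using False e0 Tfin
      by (subst Min_gr_iff) (auto simp: order_less_le)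
    have mle: "m \<le> e t" if "t \<in> T" for t unfolding m_def using Tfin that by (intro Min_le) auto
    have "((\<lambda>X::real. X powr (-l)) \<longlongrightarrow> 0) at_top"
      using l0 by (intro tendsto_neg_powr filterlim_ident) auto
    then have ev: "\<forall>\<^sub>F X in at_top. X powr (-l) < m" using mpos by (rule order_tendstoD)
    have "\<exists>\<^sub>F X in at_top. solvable xi eta l None X \<and> X powr (-l) < m \<and> X \<ge> 1"
      using frequently_eventually_conj[OF fr eventually_conj[OF ev eventually_ge_at_top[of 1]]] by (rule frequently_elim1) auto
    from frequently_ex[OF this] obtain X where X: "solvable xi eta l None X" "X powr (-l) < m" "X \<ge> 1"
      by blast
    from X(1) obtain x0 x1 x2 :: int where s: "1 \<le> \<bar>x0\<bar>" "real_of_int \<bar>x0\<bar> \<le> X"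
      "e (x0, x1, x2) \<le> X powr (-l)"
      unfolding solvable_def e_def by auto
    have "X powr (-l) \<le> real_of_int \<bar>x0\<bar> powr (-l)"
      using s l0 by (intro powr_mono2') auto
    also have "\<dots> \<le> real_of_int \<bar>x0\<bar> powr (-l0)"
      using s l0 by (intro powr_mono) auto
    finally have el: "e (x0, x1, x2) \<le> real_of_int \<bar>x0\<bar> powr (-l0)" using s(3) by linarith
    have x0N: "\<bar>x0\<bar> < int N"
    proof (rule ccontr)
      assume "\<not> \<bar>x0\<bar> < int N"
      then have "int N \<le> \<bar>x0\<bar>" by simp
      then show False using N el by blast
    qed
    have e1: "e (x0, x1, x2) \<le> 1"
    proof -
      have "real_of_int \<bar>x0\<bar> powr (-l0) \<le> real_of_int \<bar>x0\<bar> powr 0"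
        using s l0 by (intro powr_mono) auto
      moreover have "real_of_int \<bar>x0\<bar> powr 0 = 1" using s(1) by simp
      ultimately show ?thesis using el by linarith
    qed
    have x0N': "\<bar>real_of_int x0\<bar> \<le> real N" using x0N by linarith
    have bx: "\<bar>x0 * xi\<bar> \<le> real N * \<bar>xi\<bar>" "\<bar>x0 * eta\<bar> \<le> real N * \<bar>eta\<bar>"
      unfolding abs_mult by (intro mult_right_mono x0N' abs_ge_zero)+
    have "\<bar>x1\<bar> \<le> M"
    proof -
      have "\<bar>x0 * xi - x1\<bar> \<le> 1" using e1 unfolding e_def by simp
      moreover have "\<bar>real_of_int x1\<bar> \<le> \<bar>x0 * xi\<bar> + \<bar>x0 * xi - x1\<bar>" by linarith
      moreover have "real N * \<bar>xi\<bar> \<le> real N * (\<bar>xi\<bar> + \<bar>eta\<bar>)" by (intro mult_left_mono) auto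
      ultimately have "\<bar>real_of_int x1\<bar> \<le> real N * (\<bar>xi\<bar> + \<bar>eta\<bar>) + 1"
        using bx by linarith
      then show ?thesis unfolding M_def by linarith
    qed
    moreover have "\<bar>x2\<bar> \<le> M"
    proof -
      have "\<bar>x0 * eta - x2\<bar> \<le> 1" using e1 unfolding e_def by simp
      moreover have "\<bar>real_of_int x2\<bar> \<le> \<bar>x0 * eta\<bar> + \<bar>x0 * eta - x2\<bar>" by linarith
      moreover have "real N * \<bar>eta\<bar> \<le> real N * (\<bar>xi\<bar> + \<bar>eta\<bar>)" by (intro mult_left_mono) auto
      ultimately have "\<bar>real_of_int x2\<bar> \<le> real N * (\<bar>xi\<bar> + \<bar>eta\<bar>) + 1"
        using bx by linarith
      then show ?thesis unfolding M_def by linarith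
    qed
    ultimately have "(x0, x1, x2) \<in> T" unfolding T_def using x0N s(1) by (auto simp: abs_le_iff)
    then have "m \<le> e (x0, x1, x2)" by (rule mle)
    then show False using s(3) X(2) by linarith
  qed
qed



lemma floor_eq_close:
  fixes a b :: real and Q :: nat
  assumes "Q \<ge> 1" "\<lfloor>real Q * a\<rfloor> = \<lfloor>real Q * b\<rfloor>"
  shows "\<bar>a - b\<bar> \<le> 1 / real Q"
proof -
  have "\<bar>real Q * a - real Q * b\<bar> \<le> 1" using assms(2) by linarith
  then have "real Q * \<bar>a - b\<bar> \<le> 1" by (simp add: abs_mult right_diff_distrib[symmetric])
  then show ?thesis using assms(1) by (simp add: field_simps)
qed

lemma dirichlet:
  fixes xi eta :: real and Q :: nat
  assumes Q: "Q \<ge> 1"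
  shows "\<exists>x0::int. \<exists>x1::int. \<exists>x2::int. 1 \<le> x0 \<and> x0 \<le> int (Q^2) \<and> \<bar>x0 * xi - x1\<bar> \<le> 1 / real Q
     \<and> \<bar>x0 * eta - x2\<bar> \<le> 1 / real Q"
proof -
  define fr where "fr x = x - real_of_int \<lfloor>x\<rfloor>" for x :: real
  define f where "f k = (\<lfloor>real Q * fr (real k * xi)\<rfloor>, \<lfloor>real Q * fr (real k * eta)\<rfloor>)" for k :: nat
  have fr01: "0 \<le> fr x" "fr x < 1" for x unfolding fr_def by linarith+
  have rng: "\<lfloor>real Q * fr x\<rfloor> \<in> {0..int Q - 1}" for x
  proof -
    have "0 \<le> real Q * fr x" using fr01[of x] by simp
    moreover have "real Q * fr x < real Q" using fr01[of x] Q by simp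
    ultimately show ?thesis by (simp; linarith)
  qed
  have "f ` {0..Q^2} \<subseteq> {0..int Q - 1} \<times> {0..int Q - 1}" unfolding f_def using rng by auto
  moreover have "card ({0..int Q - 1} \<times> {0..int Q - 1}) = Q^2"
    by (simp add: card_cartesian_product power2_eq_square)
  ultimately have "\<not> inj_on f {0..Q^2}"
    using card_inj_on_le[of f "{0..Q^2}" "{0..int Q - 1} \<times> {0..int Q - 1}"] by auto
  then obtain i j where ij: "i \<in> {0..Q^2}" "j \<in> {0..Q^2}" "i < j" "f i = f j"
    unfolding inj_on_def by (metis linorder_neqE_nat)
  have c1: "\<bar>fr (real j * xi) - fr (real i * xi)\<bar> \<le> 1 / real Q"
    by (rule floor_eq_close[OF Q]) (use ij(4) in \<open>simp add: f_def\<close>)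
  have c2: "\<bar>fr (real j * eta) - fr (real i * eta)\<bar> \<le> 1 / real Q"
    by (rule floor_eq_close[OF Q]) (use ij(4) in \<open>simp add: f_def\<close>)
  show ?thesis
  proof (intro exI conjI)
    show "1 \<le> int j - int i" using ij by simp
    have "int j \<le> int (Q^2)" using ij by simp
    moreover have "int (Q^2) = (int Q)^2" by simp
    moreover have "int i \<ge> 0" by simp
    ultimately show "int j - int i \<le> int (Q^2)" by linarith
    show "\<bar>real_of_int (int j - int i) * xi - real_of_int (\<lfloor>real j * xi\<rfloor> - \<lfloor>real i * xi\<rfloor>)\<bar> \<le> 1 / real Q"
      using c1 unfolding fr_def by (simp add: algebra_simps)
    show "\<bar>real_of_int (int j - int i) * eta - real_of_int (\<lfloor>real j * eta\<rfloor> - \<lfloor>real i * eta\<rfloor>)\<bar> \<le> 1 / real Q"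
      using c2 unfolding fr_def by (simp add: algebra_simps)
  qed
qed

lemma dir_solvable:
  assumes l: "0 < l" "l < 1/2" and mu: "\<And>m. mu = Some m \<Longrightarrow> m \<le> 1/2"
  shows "\<forall>\<^sub>F X in at_top. solvable xi eta l mu X"
proof -
  have "((\<lambda>X::real. X powr (l - 1/2)) \<longlongrightarrow> 0) at_top"
    using l by (intro tendsto_neg_powr filterlim_ident) auto
  then have "\<forall>\<^sub>F X in at_top. X powr (l - 1/2) < 1/2" by (rule order_tendstoD) simp
  then show ?thesis using eventually_ge_at_top[of "4::real"]
  proof eventually_elim
    case (elim X)
    have X0: "X > 0" using elim by simp
    have sq: "sqrt X = X powr (1/2)" using X0 by (simp add: powr_half_sqrt)
    have sq2: "sqrt X \<ge> 2" using elim real_sqrt_le_mono[of 4 X] by simp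
    have "X powr l = X powr (l - 1/2) * X powr (1/2)" using X0 by (simp add: powr_add[symmetric])
    also have "\<dots> \<le> 1/2 * sqrt X" unfolding sq using elim by (intro mult_right_mono) auto
    finally have Xl: "X powr l \<le> sqrt X - 1" using sq2 by linarith
    define Q where "Q = nat \<lfloor>sqrt X\<rfloor>"
    have Q1: "Q \<ge> 1" unfolding Q_def using sq2 by linarith
    have Qle: "real Q \<le> sqrt X" unfolding Q_def using sq2 by linarith
    have Qgt: "real Q > sqrt X - 1" unfolding Q_def using sq2 by linarith
    have Q2: "real (Q^2) \<le> X"
    proof -
      have "real (Q^2) = (real Q)^2" by simp
      also have "\<dots> \<le> (sqrt X)^2" using Qle by (intro power_mono) auto
      finally show ?thesis using X0 by simp
    qed
    obtain x0 x1 x2 :: int where s: "1 \<le> x0" "x0 \<le> int (Q^2)" "\<bar>x0 * xi - x1\<bar> \<le> 1 / real Q"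
      "\<bar>x0 * eta - x2\<bar> \<le> 1 / real Q" using dirichlet[OF Q1] by blast
    have x0Q: "real_of_int \<bar>x0\<bar> \<le> real Q ^ 2"
    proof -
      have "real_of_int x0 \<le> real_of_int (int (Q^2))" using s(2) by (simp only: of_int_le_iff)
      moreover have "real_of_int (int (Q^2)) = real Q ^ 2" by simp
      moreover have "\<bar>x0\<bar> = x0" using s(1) by simp
      ultimately show ?thesis by simp
    qed
    have x0X: "real_of_int \<bar>x0\<bar> \<le> X" using x0Q Q2 by simp
    have err: "max \<bar>of_int x0 * xi - of_int x1\<bar> \<bar>of_int x0 * eta - of_int x2\<bar> \<le> 1 / real Q"
      using s by simp
    have "1 / real Q \<le> 1 / X powr l"
      using Xl Qgt X0 Q1 by (intro divide_left_mono) (auto intro!: mult_pos_pos)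
    also have "\<dots> = X powr (-l)" by (simp add: powr_minus_divide)
    finally have e1: "1 / real Q \<le> X powr (-l)" .
    have e2: "1 / real Q \<le> real_of_int \<bar>x0\<bar> powr (-m)" if "mu = Some m" for m
    proof -
      have m: "m \<le> 1/2" using mu that .
      have x0pos: "real_of_int \<bar>x0\<bar> > 0" using s by simp
      have "real_of_int \<bar>x0\<bar> powr m \<le> real Q"
      proof (cases "m \<ge> 0")
        case True
        have "real_of_int \<bar>x0\<bar> powr m \<le> (real Q ^ 2) powr m"
          using x0Q True by (intro powr_mono2) auto
        also have "\<dots> = (real Q powr 2) powr m"
          using Q1 by (simp add: powr_numeral)
        also have "\<dots> = real Q powr (2 * m)" by (rule powr_powr)
        also have "\<dots> \<le> real Q powr 1" using Q1 m by (intro powr_mono) auto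
        finally show ?thesis using Q1 by simp
      next
        case False
        have "real_of_int \<bar>x0\<bar> powr m \<le> real_of_int \<bar>x0\<bar> powr 0"
          using s False by (intro powr_mono) auto
        then show ?thesis using Q1 x0pos by simp
      qed
      then have "1 / real Q \<le> 1 / real_of_int \<bar>x0\<bar> powr m"
        using x0pos Q1 by (intro divide_left_mono) auto
      also have "\<dots> = real_of_int \<bar>x0\<bar> powr (-m)" by (simp add: powr_minus_divide)
      finally show ?thesis .
    qed
    show "solvable xi eta l mu X"
      unfolding solvable_def
    proof (intro exI conjI)
      show "1 \<le> \<bar>x0\<bar>" using s by simp
      show "real_of_int \<bar>x0\<bar> \<le> X" using x0X .
      show "max \<bar>of_int x0 * xi - of_int x1\<bar> \<bar>of_int x0 * eta - of_int x2\<bar> \<le> X powr (- l)"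
        using err e1 by linarith
      show "case mu of None \<Rightarrow> True | Some m \<Rightarrow> max \<bar>of_int x0 * xi - of_int x1\<bar> \<bar>of_int x0 * eta - of_int x2\<bar>
                      \<le> real_of_int \<bar>x0\<bar> powr (- m)"
      proof (cases mu)
        case (Some m)
        then show ?thesis using err e2[OF Some] by simp
      qed simp
    qed
  qed
qed



lemma sup_half:
  fixes L :: "real set"
  assumes sub: "{l. 0 < l \<and> l < 1/2} \<subseteq> L" and le: "\<And>l. l \<in> L \<Longrightarrow> l \<le> 1/2"
  shows "Sup (insert 0 (ereal ` L)) = ereal (1/2)"
proof (rule antisym)
  show "Sup (insert 0 (ereal ` L)) \<le> ereal (1/2)"
    using le by (intro Sup_least) auto
  show "ereal (1/2) \<le> Sup (insert 0 (ereal ` L))"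
  proof (rule dense_le)
    fix y assume y: "y < ereal (1/2)"
    show "y \<le> Sup (insert 0 (ereal ` L))"
    proof (cases y)
      case (real r)
      show ?thesis
      proof (cases "r \<le> 0")
        case True
        then have "y \<le> 0" using real by simp
        also have "(0::ereal) \<le> Sup (insert 0 (ereal ` L))" by (intro Sup_upper) simp
        finally show ?thesis .
      next
        case False
        then have "r \<in> L" using sub y real by auto
        then show ?thesis using real by (intro Sup_upper) simp
      qed
    next
      case PInf then show ?thesis using y by simp
    next
      case MInf then show ?thesis by simp
    qed
  qed
qed

lemma solvable_Some_None: "solvable xi eta l (Some m) X \<Longrightarrow> solvable xi eta l None X"
  unfolding solvable_def by auto

lemma main_pointwise:
  assumes g: "\<forall>k::nat. goodP (1/2 + 1/real (Suc k)) xi eta"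
  shows "lam_min xi eta = ereal (1/2)"
proof -
  have nf: "\<not> (\<exists>\<^sub>F X in at_top. solvable xi eta l None X)" if "l > 1/2" for l
  proof -
    have "0 < l - 1/2" using that by simp
    then obtain k where k0: "inverse (real (Suc k)) < l - 1/2"
      using reals_Archimedean by blast
    then have k: "1 / real (Suc k) < l - 1/2" by (simp only: inverse_eq_divide)
    show ?thesis
      by (rule not_freq[OF g[rule_format, of k]]) (use k in \<open>auto simp: add_pos_pos\<close>)
  qed
  have lam: "lam xi eta = ereal (1/2)"
    unfolding lam_def
  proof (rule sup_half)
    show "{l. 0 < l \<and> l < 1/2} \<subseteq> {l. l > 0 \<and> (\<exists>\<^sub>F X in at_top. solvable xi eta l None X)}"
    proof safe
      fix l :: real assume "0 < l" "l < 1/2"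
      then have "\<forall>\<^sub>F X in at_top. solvable xi eta l None X" by (intro dir_solvable) auto
      then show "\<exists>\<^sub>F X in at_top. solvable xi eta l None X" by (rule eventually_frequently[rotated]) simp
    qed
    show "l \<le> 1/2" if "l \<in> {l. l > 0 \<and> (\<exists>\<^sub>F X in at_top. solvable xi eta l None X)}" for l
      using that nf by force
  qed
  have hat: "lamhat_mu mu xi eta = ereal (1/2)" if mu: "mu < 1/2" for mu
    unfolding lamhat_mu_def
  proof (rule sup_half)
    show "{l. 0 < l \<and> l < 1/2} \<subseteq> {l. l > 0 \<and> (\<forall>\<^sub>F X in at_top. solvable xi eta l (Some mu) X)}"
    proof safe
      fix l :: real assume "0 < l" "l < 1/2"
      then show "\<forall>\<^sub>F X in at_top. solvable xi eta l (Some mu) X" using mu by (intro dir_solvable) auto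
    qed
    show "l \<le> 1/2" if "l \<in> {l. l > 0 \<and> (\<forall>\<^sub>F X in at_top. solvable xi eta l (Some mu) X)}" for l
    proof (rule ccontr)
      assume "\<not> l \<le> 1/2"
      then have "l > 1/2" by simp
      moreover have "\<exists>\<^sub>F X in at_top. solvable xi eta l None X"
      proof -
        have "\<forall>\<^sub>F X in at_top. solvable xi eta l (Some mu) X" using that by simp
        then have "\<forall>\<^sub>F X in at_top. solvable xi eta l None X"
          by (rule eventually_mono) (rule solvable_Some_None)
        then show ?thesis by (rule eventually_frequently[rotated]) simp
      qed
      ultimately show False using nf by blast
    qed
  qed
  have S: "{mu. 0 < mu \<and> ereal mu < lam xi eta} = {mu. 0 < mu \<and> mu < 1/2}"
    unfolding lam by auto
  have img: "(\<lambda>mu. lamhat_mu mu xi eta) ` {mu. 0 < mu \<and> mu < 1/2} = {ereal (1/2)}"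
  proof
    show "(\<lambda>mu. lamhat_mu mu xi eta) ` {mu. 0 < mu \<and> mu < 1/2} \<subseteq> {ereal (1/2)}"
      using hat by auto
    have "lamhat_mu (1/4) xi eta = ereal (1/2)" by (rule hat) simp
    then show "{ereal (1/2)} \<subseteq> (\<lambda>mu. lamhat_mu mu xi eta) ` {mu. 0 < mu \<and> mu < 1/2}"
      by (auto intro!: image_eqI[of _ _ "1/4"])
  qed
  show ?thesis unfolding lam_min_def S img by simp
qed

theorem theorem1:
  shows "AE p in (lborel :: (real \<times> real) measure). lam_min (fst p) (snd p) = ereal (1/2)"
proof -
  have "AE p in (lborel :: (real \<times> real) measure). \<forall>k::nat. goodP (1/2 + 1/real (Suc k)) (fst p) (snd p)"
    unfolding AE_all_countable by (intro allI metric_all) simp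
  then show ?thesis by (rule AE_mp) (auto intro!: AE_I2 main_pointwise)
qed

end
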